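(* Let $G$ be a graph (simple, connected, locally finite, with edges of arbitrary positive lengths) and let $\mathcal{L}(G)$ be its line graph. Let $h:\mathcal{L}(G)\to G$ be the map defined below. Then $h$ is $1$-Lipschitz, i.e. $$d_G(h(x),h(y))\le d_{\mathcal{L}(G)}(x,y)\quad\text{for all } x,y\in\mathcal{L}(G).$$
   Context: Graphs are regarded as geodesic metric spaces: each edge $e$ of length $L(e)$ is identified with the real interval $[0,L(e)]$, so interior points of edges are points of the graph, and $d_G$ is the induced shortest-path distance. The line graph $\mathcal{L}(G)$ has a vertex $V_e$ for each edge $e$ of $G$, and an edge $[V_{e_i},V_{e_j}]$ whenever $e_i\neq e_j$ and $e_i\cap e_j\neq\varnothing$; the length of $[V_{e_i},V_{e_j}]$ is $(L(e_i)+L(e_j))/2$. For $e\in E(G)$, $Pm(e)$ denotes the midpoint of $e$. For an edge $[V_{e_i},V_{e_j}]$ of $\mathcal{L}(G)$, $Pm_{\mathcal{L}}([V_{e_i},V_{e_j}])$ denotes the point of that edge at distance $L(e_i)/2$ from $V_{e_i}$ (hence at distance $L(e_j)/2$ from $V_{e_j}$). The map $h$ is defined by $h(V_e)=Pm(e)$ and $h(Pm_{\mathcal{L}}([V_{e_i},V_{e_j}]))=$ the common vertex $e_i\cap e_j$ of $G$; and for a point $x_0$ in the interior of the segment from $V_e$ to $Pm_{\mathcal{L}}([V_e,V_{e_0}])$ (a segment of length $L(e)/2$), $h(x_0)$ is the point of the half-edge of $e$ from $Pm(e)$ to the vertex $e\cap e_0$ at distance $d(x_0,V_e)$ from $Pm(e)$.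 *)

theory Defs
  imports Complex_Main
begin

text \<open>A point of the metric graph
is either a vertex (Vtx v) or an interior point Mid u v t of the edge {u,v}, namely
the point at distance t from u, with 0 < t < L {u,v}.  (Mid u v t and Mid v u (L{u,v} - t)
denote the same point; the distance below identifies them.)\<close>

datatype 'v gpoint = Vtx 'v | Mid 'v 'v real

definition simple_graph :: "'v set \<Rightarrow> 'v set set \<Rightarrow> bool" where
  "simple_graph V E \<longleftrightarrow> (\<forall>e\<in>E. \<exists>u v. u \<noteq> v \<and> u \<in> V \<and> v \<in> V \<and> e = {u, v})"

definition locally_finite :: "'v set \<Rightarrow> 'v set set \<Rightarrow> bool" where
  "locally_finite V E \<longleftrightarrow> (\<forall>v\<in>V. finite {e\<in>E. v \<in> e})"

definition graph_connected :: "'v set \<Rightarrow> 'v set set \<Rightarrow> bool" where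
  "graph_connected V E \<longleftrightarrow>
     (\<forall>u\<in>V. \<forall>v\<in>V. (u, v) \<in> {(a, b). {a, b} \<in> E}\<^sup>*)"

definition positive_lengths :: "'v set set \<Rightarrow> ('v set \<Rightarrow> real) \<Rightarrow> bool" where
  "positive_lengths E L \<longleftrightarrow> (\<forall>e\<in>E. L e > 0)"

fun is_gpoint :: "'v set \<Rightarrow> 'v set set \<Rightarrow> ('v set \<Rightarrow> real) \<Rightarrow> 'v gpoint \<Rightarrow> bool" where
  "is_gpoint V E L (Vtx v) \<longleftrightarrow> v \<in> V"
| "is_gpoint V E L (Mid u v t) \<longleftrightarrow> {u, v} \<in> E \<and> u \<noteq> v \<and> 0 < t \<and> t < L {u, v}"

definition on_edge :: "'v set set \<Rightarrow> ('v set \<Rightarrow> real) \<Rightarrow> 'v gpoint \<Rightarrow> 'v \<Rightarrow> 'v \<Rightarrow> bool" where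
  "on_edge E L p u v \<longleftrightarrow> {u, v} \<in> E \<and> u \<noteq> v \<and>
     (p = Vtx u \<or> p = Vtx v \<or>
      (\<exists>t. 0 < t \<and> t < L {u, v} \<and> (p = Mid u v t \<or> p = Mid v u t)))"

definition pos :: "('v set \<Rightarrow> real) \<Rightarrow> 'v gpoint \<Rightarrow> 'v \<Rightarrow> 'v \<Rightarrow> real" where
  "pos L p u v = (case p of
       Vtx w \<Rightarrow> (if w = u then 0 else L {u, v})
     | Mid a b t \<Rightarrow> (if a = u then t else L {u, v} - t))"

inductive walk :: "'v set set \<Rightarrow> ('v set \<Rightarrow> real) \<Rightarrow> 'v gpoint \<Rightarrow> 'v gpoint \<Rightarrow> real \<Rightarrow> bool"
  for E L where
  walk_refl: "walk E L x x 0"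
| walk_step: "on_edge E L p u v \<Longrightarrow> on_edge E L q u v \<Longrightarrow> walk E L q y r \<Longrightarrow>
     walk E L p y (\<bar>pos L p u v - pos L q u v\<bar> + r)"

definition gdist :: "'v set set \<Rightarrow> ('v set \<Rightarrow> real) \<Rightarrow> 'v gpoint \<Rightarrow> 'v gpoint \<Rightarrow> real" where
  "gdist E L x y = Inf {r. walk E L x y r}"

definition line_edges :: "'v set set \<Rightarrow> 'v set set set" where
  "line_edges E = {{e, f} | e f. e \<in> E \<and> f \<in> E \<and> e \<noteq> f \<and> e \<inter> f \<noteq> {}}"

definition line_len :: "('v set \<Rightarrow> real) \<Rightarrow> 'v set set \<Rightarrow> real" where
  "line_len L \<epsilon> = (\<Sum>e\<in>\<epsilon>. L e) / 2"

definition other_end :: "'v set \<Rightarrow> 'v \<Rightarrow> 'v" where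
  "other_end e w = (THE u. u \<in> e \<and> u \<noteq> w)"

definition edge_mid :: "('v set \<Rightarrow> real) \<Rightarrow> 'v set \<Rightarrow> 'v gpoint" where
  "edge_mid L e = (let (u, v) = (SOME (u, v). u \<noteq> v \<and> e = {u, v}) in Mid u v (L e / 2))"

fun hmap :: "('v set \<Rightarrow> real) \<Rightarrow> 'v set gpoint \<Rightarrow> 'v gpoint" where
  "hmap L (Vtx e) = edge_mid L e"
| "hmap L (Mid e f t) =
     (let w = (THE w. w \<in> e \<inter> f) in
      if t = L e / 2 then Vtx w
      else if t < L e / 2 then Mid w (other_end e w) (L e / 2 - t)
      else Mid w (other_end f w) (t - L e / 2))"

end

theory Submission imports Defs begin

lemma walk_trans:
  assumes "walk E L x y r" "walk E L y z s" shows "walk E L x z (r + s)"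
  using assms
proof (induction rule: walk.induct)
  case (walk_refl x) then show ?case by simp
next
  case (walk_step p u v q y r)
  have "walk E L p z (\<bar>pos L p u v - pos L q u v\<bar> + (r + s))"
    using walk_step by (intro walk.walk_step) auto
  then show ?case by (simp add: add.assoc)
qed

lemma walk_nonneg: "walk E L x y r \<Longrightarrow> r \<ge> 0"
  by (induction rule: walk.induct) auto

lemma one_step:
  assumes "on_edge E L p u v" "on_edge E L q u v"
  shows "walk E L p q \<bar>pos L p u v - pos L q u v\<bar>"
  using walk.walk_step[OF assms walk.walk_refl[of E L q]] by simp

lemma the_inter:
  assumes "e = {w,a}" "f = {w,c}" "w \<noteq> a" "w \<noteq> c" "a \<noteq> c"
  shows "(THE x. x \<in> e \<inter> f) = w" "(THE x. x \<in> f \<inter> e) = w"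
    "other_end e w = a" "other_end f w = c"
  using assms by (auto simp: other_end_def intro!: the_equality)

lemma edge_mid_eq:
  assumes "e = {w,a}" "w \<noteq> a"
  shows "\<exists>u v. edge_mid L e = Mid u v (L e / 2) \<and> ((u = w \<and> v = a) \<or> (u = a \<and> v = w))"
proof -
  let ?P = "\<lambda>(u,v). u \<noteq> v \<and> e = {u, v}"
  have "?P (w,a)" using assms by auto
  hence "?P (SOME x. ?P x)" by (rule someI)
  then obtain u v where uv: "(SOME x. ?P x) = (u,v)" "u \<noteq> v" "e = {u,v}"
    by (cases "SOME x. ?P x") auto
  have "edge_mid L e = Mid u v (L e / 2)" unfolding edge_mid_def using uv(1) by simp
  moreover have "(u = w \<and> v = a) \<or> (u = a \<and> v = w)" using uv assms by (auto simp: doubleton_eq_iff)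
  ultimately show ?thesis by blast
qed


lemma key:
  assumes pl: "positive_lengths E L" and eE: "e \<in> E" and fE: "f \<in> E"
    and ew: "e = {w,a}" and fw: "f = {w,c}" and wa: "w \<noteq> a" and wc: "w \<noteq> c" and ac: "a \<noteq> c"
    and oe: "on_edge (line_edges E) (line_len L) p e f"
  shows "(pos (line_len L) p e f \<le> L e / 2 \<longrightarrow> on_edge E L (hmap L p) w a \<and>
            pos L (hmap L p) w a = L e / 2 - pos (line_len L) p e f)
       \<and> (pos (line_len L) p e f \<ge> L e / 2 \<longrightarrow> on_edge E L (hmap L p) w c \<and>
            pos L (hmap L p) w c = pos (line_len L) p e f - L e / 2)"
proof -
  have Le: "L e > 0" and Lf: "L f > 0" using pl eE fE by (auto simp: positive_lengths_def)
  have ef: "e \<noteq> f" using ew fw wa wc ac by (auto simp: doubleton_eq_iff)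
  have LL: "line_len L {e,f} = L e / 2 + L f / 2" using ef by (simp add: line_len_def)
  note th = the_inter[OF ew fw wa wc ac]
  have eE': "{w,a} \<in> E" "{a,w} \<in> E" "{w,c} \<in> E" using eE fE ew fw by (auto simp: insert_commute)
  have Lwa: "L {w,a} = L e" "L {a,w} = L e" and Lwc: "L {w,c} = L f"
    using ew fw by (auto simp: insert_commute)
  have mide: "on_edge E L (edge_mid L e) w a \<and> pos L (edge_mid L e) w a = L e / 2"
  proof -
    obtain u v where "edge_mid L e = Mid u v (L e / 2)" "(u = w \<and> v = a) \<or> (u = a \<and> v = w)"
      using edge_mid_eq[OF ew wa] by blast
    then show ?thesis using Le wa eE' Lwa unfolding on_edge_def pos_def by (auto intro: exI[of _ "L e / 2"])
  qed
  have midf: "on_edge E L (edge_mid L f) w c \<and> pos L (edge_mid L f) w c = L f / 2"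
  proof -
    obtain u v where "edge_mid L f = Mid u v (L f / 2)" "(u = w \<and> v = c) \<or> (u = c \<and> v = w)"
      using edge_mid_eq[OF fw wc] by blast
    then show ?thesis using Lf wc eE' Lwc ew fw unfolding on_edge_def pos_def by (auto simp: insert_commute intro: exI[of _ "L f / 2"])
  qed
  have vw: "on_edge E L (Vtx w) w a" "pos L (Vtx w) w a = 0"
       "on_edge E L (Vtx w) w c" "pos L (Vtx w) w c = 0"
    using eE' wa wc by (auto simp: on_edge_def pos_def)
  from oe consider "p = Vtx e" | "p = Vtx f"
    | t where "0 < t" "t < line_len L {e,f}" "p = Mid e f t"
    | t where "0 < t" "t < line_len L {e,f}" "p = Mid f e t"
    unfolding on_edge_def by blast
  then show ?thesis
  proof cases
    case 1 then show ?thesis using mide Le by (simp add: pos_def)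
  next
    case 2 then show ?thesis using midf Le Lf ef LL by (simp add: pos_def)
  next
    case (3 t)
    show ?thesis
    proof (cases "t = L e / 2")
      case True then show ?thesis using 3 vw th by (simp add: pos_def)
    next
      case False
      show ?thesis
      proof (cases "t < L e / 2")
        case True then show ?thesis using 3 th False eE' Lwa wa
          by (auto simp: pos_def on_edge_def)
      next
        case F2: False then show ?thesis using 3 th False eE' Lwc wc LL
          by (auto simp: pos_def on_edge_def)
      qed
    qed
  next
    case (4 t)
    show ?thesis
    proof (cases "t = L f / 2")
      case True then show ?thesis using 4 vw th ef LL by (simp add: pos_def)
    next
      case False
      show ?thesis
      proof (cases "t < L f / 2")
        case True then show ?thesis using 4 th False eE' Lwc wc LL ef
          by (auto simp: pos_def on_edge_def)
      next
        case F2: False then show ?thesis using 4 th False eE' Lwa wa LL ef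
          by (auto simp: pos_def on_edge_def)
      qed
    qed
  qed
qed


lemma line_edge_split:
  assumes sg: "simple_graph V E" and "{e,f} \<in> line_edges E" and ef: "e \<noteq> f"
  shows "e \<in> E \<and> f \<in> E \<and> (\<exists>w a c. e = {w,a} \<and> f = {w,c} \<and> w \<noteq> a \<and> w \<noteq> c \<and> a \<noteq> c)"
proof -
  obtain e' f' where *: "{e,f} = {e',f'}" "e' \<in> E" "f' \<in> E" "e' \<noteq> f'" "e' \<inter> f' \<noteq> {}"
    using assms(2) unfolding line_edges_def by blast
  from *(1) have "(e = e' \<and> f = f') \<or> (e = f' \<and> f = e')" by (simp add: doubleton_eq_iff)
  then have E: "e \<in> E" "f \<in> E" "e \<inter> f \<noteq> {}" using *(2-5) by blast+
  obtain u v where uv: "e = {u,v}" "u \<noteq> v" using sg E(1) unfolding simple_graph_def by blast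
  obtain x y where xy: "f = {x,y}" "x \<noteq> y" using sg E(2) unfolding simple_graph_def by blast
  have "\<exists>w a c. e = {w,a} \<and> f = {w,c} \<and> w \<noteq> a \<and> w \<noteq> c \<and> a \<noteq> c"
  proof (cases "u = x")
    case True
    have "v \<noteq> y" using True uv xy ef by blast
    then show ?thesis using True uv xy by blast
  next
    case F1: False show ?thesis
    proof (cases "u = y")
      case True
      have f2: "f = {u,x}" using True xy by blast
      have "v \<noteq> x" using True uv xy ef by blast
      then show ?thesis using f2 uv xy True by blast
    next
      case F2: False
      then have "v = x \<or> v = y" using E(3) uv xy F1 by blast
      then show ?thesis
      proof
        assume vx: "v = x"
        have "e = {v,u}" using uv by blast
        moreover have "u \<noteq> y" using F2 .
        ultimately show ?thesis using uv xy vx by blast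
      next
        assume vy: "v = y"
        have "e = {v,u}" "f = {v,x}" using uv xy vy by blast+
        moreover have "u \<noteq> x" using F1 .
        ultimately show ?thesis using uv xy vy by blast
      qed
    qed
  qed
  then show ?thesis using E by blast
qed

lemma step_map:
  assumes sg: "simple_graph V E" and pl: "positive_lengths E L"
    and op: "on_edge (line_edges E) (line_len L) p e f"
    and oq: "on_edge (line_edges E) (line_len L) q e f"
  shows "walk E L (hmap L p) (hmap L q)
           \<bar>pos (line_len L) p e f - pos (line_len L) q e f\<bar>"
proof -
  have "{e,f} \<in> line_edges E" "e \<noteq> f" using op unfolding on_edge_def by auto
  then obtain w a c where eE: "e \<in> E" and fE: "f \<in> E" and
    r: "e = {w,a}" "f = {w,c}" "w \<noteq> a" "w \<noteq> c" "a \<noteq> c"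
    using line_edge_split[OF sg] by blast
  note kp = key[OF pl eE fE r op] and kq = key[OF pl eE fE r oq]
  have vw: "on_edge E L (Vtx w) w a" "pos L (Vtx w) w a = 0"
       "on_edge E L (Vtx w) w c" "pos L (Vtx w) w c = 0"
    using eE fE r by (auto simp: on_edge_def pos_def insert_commute)
  define s where "s = pos (line_len L) p e f"
  define s' where "s' = pos (line_len L) q e f"
  have "s \<le> L e / 2 \<or> s \<ge> L e / 2" "s' \<le> L e / 2 \<or> s' \<ge> L e / 2" by auto
  then consider "s \<le> L e / 2" "s' \<le> L e / 2" | "s \<ge> L e / 2" "s' \<ge> L e / 2"
    | "s \<le> L e / 2" "s' \<ge> L e / 2" | "s \<ge> L e / 2" "s' \<le> L e / 2" by blast
  then show ?thesis
  proof cases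
    case 1
    then have "walk E L (hmap L p) (hmap L q) \<bar>(L e/2 - s) - (L e/2 - s')\<bar>"
      using one_step[of E L "hmap L p" w a "hmap L q"] kp kq unfolding s_def s'_def by auto
    then show ?thesis unfolding s_def s'_def by (simp add: abs_minus_commute)
  next
    case 2
    then have "walk E L (hmap L p) (hmap L q) \<bar>(s - L e/2) - (s' - L e/2)\<bar>"
      using one_step[of E L "hmap L p" w c "hmap L q"] kp kq unfolding s_def s'_def by auto
    then show ?thesis unfolding s_def s'_def by simp
  next
    case 3
    have w1: "walk E L (hmap L p) (Vtx w) \<bar>(L e/2 - s) - 0\<bar>"
      using one_step[of E L "hmap L p" w a "Vtx w"] kp vw 3 unfolding s_def s'_def by auto
    have w2: "walk E L (Vtx w) (hmap L q) \<bar>0 - (s' - L e/2)\<bar>"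
      using one_step[of E L "Vtx w" w c "hmap L q"] kq vw 3 unfolding s_def s'_def by auto
    have "\<bar>(L e/2 - s) - 0\<bar> + \<bar>0 - (s' - L e/2)\<bar> = \<bar>s - s'\<bar>" using 3 by auto
    then show ?thesis using walk_trans[OF w1 w2] unfolding s_def s'_def by simp
  next
    case 4
    have w1: "walk E L (hmap L p) (Vtx w) \<bar>(s - L e/2) - 0\<bar>"
      using one_step[of E L "hmap L p" w c "Vtx w"] kp vw 4 unfolding s_def s'_def by auto
    have w2: "walk E L (Vtx w) (hmap L q) \<bar>0 - (L e/2 - s')\<bar>"
      using one_step[of E L "Vtx w" w a "hmap L q"] kq vw 4 unfolding s_def s'_def by auto
    have "\<bar>(s - L e/2) - 0\<bar> + \<bar>0 - (L e/2 - s')\<bar> = \<bar>s - s'\<bar>" using 4 by auto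
    then show ?thesis using walk_trans[OF w1 w2] unfolding s_def s'_def by simp
  qed
qed

lemma walk_map:
  assumes sg: "simple_graph V E" and pl: "positive_lengths E L"
  shows "walk (line_edges E) (line_len L) x y r \<Longrightarrow> walk E L (hmap L x) (hmap L y) r"
proof (induction rule: walk.induct)
  case (walk_refl x) then show ?case by (rule walk.walk_refl)
next
  case (walk_step p u v q y r)
  then show ?case using walk_trans[OF step_map[OF sg pl walk_step(1,2)]] by blast
qed

lemma adj_walk:
  assumes "e \<in> E" "f \<in> E" "e \<inter> f \<noteq> {}"
  shows "\<exists>r. walk (line_edges E) (line_len L) (Vtx e) (Vtx f) r"
proof (cases "e = f")
  case True then show ?thesis using walk.walk_refl by blast
next
  case False
  then have le: "{e,f} \<in> line_edges E" using assms unfolding line_edges_def by blast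
  have "on_edge (line_edges E) (line_len L) (Vtx e) e f" "on_edge (line_edges E) (line_len L) (Vtx f) e f"
    using le False by (auto simp: on_edge_def)
  then show ?thesis using one_step[of "line_edges E" "line_len L" "Vtx e" e f "Vtx f"] by blast
qed

lemma conn_walk:
  assumes "(a, b) \<in> {(a, b). {a, b} \<in> E}\<^sup>*"
  shows "\<forall>e\<in>E. \<forall>f\<in>E. a \<in> e \<longrightarrow> b \<in> f \<longrightarrow> (\<exists>r. walk (line_edges E) (line_len L) (Vtx e) (Vtx f) r)"
  using assms
proof (induction rule: rtrancl_induct)
  case base then show ?case using adj_walk by blast
next
  case (step b c)
  show ?case
  proof (intro ballI impI)
    fix e f assume "e \<in> E" "f \<in> E" "a \<in> e" "c \<in> f"
    have bc: "{b,c} \<in> E" using step by auto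
    obtain r1 where "walk (line_edges E) (line_len L) (Vtx e) (Vtx {b,c}) r1"
      using step.IH \<open>e \<in> E\<close> bc \<open>a \<in> e\<close> by blast
    moreover obtain r2 where "walk (line_edges E) (line_len L) (Vtx {b,c}) (Vtx f) r2"
      using adj_walk[OF bc \<open>f \<in> E\<close>] \<open>c \<in> f\<close> by blast
    ultimately show "\<exists>r. walk (line_edges E) (line_len L) (Vtx e) (Vtx f) r"
      using walk_trans by blast
  qed
qed

lemma to_vtx:
  assumes "is_gpoint E (line_edges E) (line_len L) x"
  shows "\<exists>e\<in>E. (\<exists>r. walk (line_edges E) (line_len L) x (Vtx e) r)
                \<and> (\<exists>r. walk (line_edges E) (line_len L) (Vtx e) x r)"
proof (cases x)
  case (Vtx e) then show ?thesis using assms walk.walk_refl[of "line_edges E" "line_len L" x] by auto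
next
  case (Mid e f t)
  then have "{e,f} \<in> line_edges E" "e \<noteq> f" "0 < t" "t < line_len L {e,f}" using assms by auto
  then have e: "e \<in> E" unfolding line_edges_def by (auto simp: doubleton_eq_iff)
  have "on_edge (line_edges E) (line_len L) x e f" "on_edge (line_edges E) (line_len L) (Vtx e) e f"
    using Mid \<open>{e,f} \<in> line_edges E\<close> \<open>e \<noteq> f\<close> \<open>0 < t\<close> \<open>t < line_len L {e,f}\<close>
    by (auto simp: on_edge_def)
  then show ?thesis using one_step[of "line_edges E" "line_len L" x e f "Vtx e"]
      one_step[of "line_edges E" "line_len L" "Vtx e" e f x] e by blast
qed

lemma line_conn:
  assumes sg: "simple_graph V E" and gc: "graph_connected V E"
    and x: "is_gpoint E (line_edges E) (line_len L) x"
    and y: "is_gpoint E (line_edges E) (line_len L) y"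
  shows "\<exists>r. walk (line_edges E) (line_len L) x y r"
proof -
  obtain e r1 where e: "e \<in> E" "walk (line_edges E) (line_len L) x (Vtx e) r1" using to_vtx[OF x] by blast
  obtain f r2 where f: "f \<in> E" "walk (line_edges E) (line_len L) (Vtx f) y r2" using to_vtx[OF y] by blast
  obtain a b where ab: "e = {a,b}" "a \<in> V" using sg e(1) unfolding simple_graph_def by blast
  obtain c d where cd: "f = {c,d}" "c \<in> V" using sg f(1) unfolding simple_graph_def by blast
  have "(a, c) \<in> {(a, b). {a, b} \<in> E}\<^sup>*" using gc ab cd unfolding graph_connected_def by blast
  then obtain r where "walk (line_edges E) (line_len L) (Vtx e) (Vtx f) r"
  proof -
    have "\<exists>r. walk (line_edges E) (line_len L) (Vtx e) (Vtx f) r"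
      using conn_walk[OF \<open>(a, c) \<in> _\<close>, of L] e(1) f(1) ab(1) cd(1) by simp
    then show ?thesis using that by blast
  qed
  then obtain r3 where "walk (line_edges E) (line_len L) x (Vtx f) r3"
    using e(2) walk_trans by blast
  then show ?thesis using f(2) walk_trans by blast
qed

theorem mainTheorem1:
  fixes V :: "'v set" and E :: "'v set set" and L :: "'v set \<Rightarrow> real"
  assumes "simple_graph V E" and "graph_connected V E" and "locally_finite V E"
    and "positive_lengths E L"
    and "is_gpoint E (line_edges E) (line_len L) x"
    and "is_gpoint E (line_edges E) (line_len L) y"
  shows "gdist E L (hmap L x) (hmap L y)
           \<le> gdist (line_edges E) (line_len L) x y"
proof -
  let ?S = "{r. walk (line_edges E) (line_len L) x y r}"
  have ne: "?S \<noteq> {}" using line_conn[OF assms(1,2,5,6)] by blast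
  have bdd: "bdd_below {r. walk E L (hmap L x) (hmap L y) r}"
    using walk_nonneg by (intro bdd_belowI[of _ 0]) blast
  have "gdist E L (hmap L x) (hmap L y) \<le> r" if "r \<in> ?S" for r
  proof -
    have "walk E L (hmap L x) (hmap L y) r" using walk_map[OF assms(1,4)] that by blast
    then show ?thesis unfolding gdist_def by (intro cInf_lower bdd) simp
  qed
  then show ?thesis unfolding gdist_def[of "line_edges E"] using ne by (intro cInf_greatest) auto
qed

end
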